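(* Let $\mathcal{C}_2=\mathbb{C}\{e_1,e_2\}$ be the complex algebra with basis $1,e_1,e_2,e_{12}=e_1e_2$, where $e_1^2=e_2^2=-1$, $e_1e_2=-e_2e_1$. For $A=A_0+A_1e_1+A_2e_2+A_3e_{12}\in\mathcal{C}_2^{m\times n}$ with $A_j\in\mathbb{C}^{m\times n}$, define $$\Phi_2(A)=\begin{pmatrix}A_0+A_1i & -(A_2+A_3i)\\ A_2-A_3i & A_0-A_1i\end{pmatrix}\in\mathbb{C}^{2m\times2n},$$ and $A^{\#}=A_0^*-A_1^*e_1-A_2^*e_2-A_3^*e_{12}$ (with $^*$ the conjugate transpose). Let $A,B\in\mathcal{C}_2^{m\times n}$, $C\in\mathcal{C}_2^{n\times p}$, $\lambda\in\mathbb{C}$. Then: (a) $A=B$ iff $\Phi_2(A)=\Phi_2(B)$; (b) $\Phi_2(A+B)=\Phi_2(A)+\Phi_2(B)$; (c) $\Phi_2(AC)=\Phi_2(A)\Phi_2(C)$, $\Phi_2(\lambda A)=\lambda\Phi_2(A)$, $\Phi_2(I_m)=I_{2m}$; (d) $\Phi_2(A^{\#})=\Phi_2(A)^*$; (e) $A=\frac14\,[(1-ie_1)I_m,\ (e_2+ie_{12})I_m]\,\Phi_2(A)\,[(1-ie_1)I_n,\ (-e_2+ie_{12})I_n]^T$; (f) if $m=n$: $A$ is invertible iff $\Phi_2(A)$ is invertible, in which case $\Phi_2(A^{-1})=\Phi_2(A)^{-1}$; (g) if $m=n$: $p_A(A)=0$, where $p_A(\lambda)=\det[\lambda I_{2m}-\Phi_2(A)]$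 is the characteristic polynomial of $\Phi_2(A)$; (h) for square $A,B\in\mathcal{C}_2^{m\times m}$: there exists an invertible $X\in\mathcal{C}_2^{m\times m}$ with $AX=XB$ iff $\Phi_2(A)$ and $\Phi_2(B)$ are similar over $\mathbb{C}$.
   Context: $i$ is the imaginary unit of $\mathbb{C}$, commuting with all elements of $\mathcal{C}_2$. In (g), the complex polynomial $p_A$ is evaluated at the matrix $A$ over $\mathcal{C}_2$ in the usual way. *)

theory Defs
  imports "Jordan_Normal_Form.Matrix" "Jordan_Normal_Form.Char_Poly"
begin

text \<open>An element a0 + a1 e1 + a2 e2 + a3 e12 is stored by its four complex
coordinates, with e1^2 = e2^2 = -1, e1 e2 = - e2 e1 = e12.\<close>

datatype C2 = C2 (c0: complex) (c1: complex) (c2: complex) (c3: complex)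

instantiation C2 :: ring_1
begin

definition zero_C2 where "0 = C2 0 0 0 0"
definition one_C2 where "1 = C2 1 0 0 0"
definition plus_C2 where
  "a + b = C2 (c0 a + c0 b) (c1 a + c1 b) (c2 a + c2 b) (c3 a + c3 b)"
definition uminus_C2 where "- a = C2 (- c0 a) (- c1 a) (- c2 a) (- c3 a)"
definition minus_C2 where
  "a - b = C2 (c0 a - c0 b) (c1 a - c1 b) (c2 a - c2 b) (c3 a - c3 b)"
definition times_C2 where
  "a * b = C2
     (c0 a * c0 b - c1 a * c1 b - c2 a * c2 b - c3 a * c3 b)
     (c0 a * c1 b + c1 a * c0 b + c2 a * c3 b - c3 a * c2 b)
     (c0 a * c2 b + c2 a * c0 b - c1 a * c3 b + c3 a * c1 b)
     (c0 a * c3 b + c3 a * c0 b + c1 a * c2 b - c2 a * c1 b)"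

instance
  by standard (auto simp: zero_C2_def one_C2_def plus_C2_def uminus_C2_def
      minus_C2_def times_C2_def algebra_simps intro!: C2.expand)

end

definition cs :: "complex \<Rightarrow> C2" where "cs z = C2 z 0 0 0"
definition e1 :: C2 where "e1 = C2 0 1 0 0"
definition e2 :: C2 where "e2 = C2 0 0 1 0"
definition e12 :: C2 where "e12 = C2 0 0 0 1"

definition comp0 :: "C2 mat \<Rightarrow> complex mat" where "comp0 A = map_mat c0 A"
definition comp1 :: "C2 mat \<Rightarrow> complex mat" where "comp1 A = map_mat c1 A"
definition comp2 :: "C2 mat \<Rightarrow> complex mat" where "comp2 A = map_mat c2 A"
definition comp3 :: "C2 mat \<Rightarrow> complex mat" where "comp3 A = map_mat c3 A"

definition ctrans :: "complex mat \<Rightarrow> complex mat" where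
  "ctrans M = mat (dim_col M) (dim_row M) (\<lambda>(i,j). cnj (M $$ (j,i)))"

definition Phi2 :: "C2 mat \<Rightarrow> complex mat" where
  "Phi2 A = four_block_mat
     (comp0 A + \<i> \<cdot>\<^sub>m comp1 A)  (- (comp2 A + \<i> \<cdot>\<^sub>m comp3 A))
     (comp2 A - \<i> \<cdot>\<^sub>m comp3 A)  (comp0 A - \<i> \<cdot>\<^sub>m comp1 A)"

definition sharp :: "C2 mat \<Rightarrow> C2 mat" where
  "sharp A = mat (dim_col A) (dim_row A) (\<lambda>ij.
      cs (ctrans (comp0 A) $$ ij) - cs (ctrans (comp1 A) $$ ij) * e1
      - cs (ctrans (comp2 A) $$ ij) * e2 - cs (ctrans (comp3 A) $$ ij) * e12)"

definition row_block :: "'a mat \<Rightarrow> 'a mat \<Rightarrow> 'a mat" where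
  "row_block X Y = mat (dim_row X) (dim_col X + dim_col Y)
     (\<lambda>(i,j). if j < dim_col X then X $$ (i,j) else Y $$ (i, j - dim_col X))"

definition poly_eval_C2mat :: "complex poly \<Rightarrow> C2 mat \<Rightarrow> C2 mat" where
  "poly_eval_C2mat p A = mat (dim_row A) (dim_col A)
     (\<lambda>ij. \<Sum>k\<le>degree p. cs (coeff p k) * (A ^\<^sub>m k) $$ ij)"

end

theory Submission
  imports Defs
begin


definition phi :: "bool \<Rightarrow> bool \<Rightarrow> C2 \<Rightarrow> complex" where
"phi a b x = (if a then (if b then c0 x - \<i> * c1 x else c2 x - \<i> * c3 x)
              else (if b then - (c2 x + \<i> * c3 x) else c0 x + \<i> * c1 x))"

definition psi :: "(bool \<Rightarrow> bool \<Rightarrow> complex) \<Rightarrow> C2" where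
"psi f = C2 ((f False False + f True True)/2) ((f False False - f True True)/(2*\<i>))
            ((f True False - f False True)/2) (-(f False True + f True False)/(2*\<i>))"

lemma ii: "\<i> * \<i> = -1" by simp

lemma phi_add: "phi a b (x + y) = phi a b x + phi a b y"
  by (simp add: phi_def plus_C2_def algebra_simps)

lemma phi_zero[simp]: "phi a b 0 = 0"
  by (simp add: phi_def zero_C2_def)

lemma phi_one: "phi a b 1 = (if a = b then 1 else 0)"
  by (simp add: phi_def one_C2_def)

lemma phi_sum: "phi a b (sum f S) = (\<Sum>s\<in>S. phi a b (f s))"
  by (induct S rule: infinite_finite_induct) (auto simp: phi_add)

lemma phi_mult: "phi a b (x * y) = phi a False x * phi False b y + phi a True x * phi True b y"
  by (cases a; cases b; simp add: phi_def times_C2_def; simp add: algebra_simps)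

lemma phi_psi: "phi a b (psi f) = f a b"
  by (cases a; cases b; simp add: phi_def psi_def field_simps)

lemma psi_phi: "psi (\<lambda>a b. phi a b x) = x"
  by (cases x; simp add: phi_def psi_def field_simps)

lemma phi_inj: assumes "\<And>a b. phi a b x = phi a b y" shows "x = y"
proof -
  have "x = psi (\<lambda>a b. phi a b x)" by (simp only: psi_phi)
  also have "\<dots> = psi (\<lambda>a b. phi a b y)" using assms by simp
  also have "\<dots> = y" by (simp only: psi_phi)
  finally show ?thesis .
qed

lemma phi_cs: "phi a b (cs z * x) = z * phi a b x"
  by (simp add: phi_def cs_def times_C2_def algebra_simps)

lemma phi_sharp: "phi a b (cs (cnj (c0 x)) - cs (cnj (c1 x)) * e1 - cs (cnj (c2 x)) * e2 - cs (cnj (c3 x)) * e12) = cnj (phi b a x)"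
  by (cases a; cases b; simp add: phi_def cs_def times_C2_def minus_C2_def e1_def e2_def e12_def)

lemma elem_e: fixes x :: C2 shows
 "x = cs (1/4) * (((1 - cs \<i> * e1) * cs (phi False False x) + (e2 + cs \<i> * e12) * cs (phi True False x)) * (1 - cs \<i> * e1)
    + ((1 - cs \<i> * e1) * cs (phi False True x) + (e2 + cs \<i> * e12) * cs (phi True True x)) * (- e2 + cs \<i> * e12))"
  by (cases x; simp add: phi_def cs_def times_C2_def minus_C2_def plus_C2_def uminus_C2_def one_C2_def e1_def e2_def e12_def; simp add: algebra_simps)



lemma sum_split2: "(\<Sum>k\<in>{0..<2*(n::nat)}. f k) = (\<Sum>k\<in>{0..<n}. f k) + (\<Sum>k\<in>{0..<n}. f (k+n))"
proof -
  have "(\<Sum>k\<in>{0..<2*n}. f k) = (\<Sum>k\<in>{0..<n}. f k) + (\<Sum>k\<in>{n..<n+n}. f k)"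
    using sum.atLeastLessThan_concat[of 0 n "n+n" f] by (simp add: mult_2)
  also have "(\<Sum>k\<in>{n..<n+n}. f k) = (\<Sum>k\<in>{0..<n}. f (k+n))"
    using sum.shift_bounds_nat_ivl[of f 0 n n] by simp
  finally show ?thesis .
qed

lemma Phi2_dim[simp]: "dim_row (Phi2 A) = 2 * dim_row A" "dim_col (Phi2 A) = 2 * dim_col A"
  by (simp_all add: Phi2_def comp0_def comp1_def comp2_def comp3_def)

lemma Phi2_carrier: "A \<in> carrier_mat m n \<Longrightarrow> Phi2 A \<in> carrier_mat (2*m) (2*n)"
  unfolding carrier_mat_def mem_Collect_eq Phi2_dim by auto

lemma Phi2_index: assumes "A \<in> carrier_mat m n" "i < 2*m" "j < 2*n"
  shows "Phi2 A $$ (i,j) = phi (m \<le> i) (n \<le> j) (A $$ (if m \<le> i then i - m else i, if n \<le> j then j - n else j))"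
  using assms by (auto simp: Phi2_def comp0_def comp1_def comp2_def comp3_def phi_def)

lemma Phi2_index': assumes "A \<in> carrier_mat m n" "i < m" "j < n"
  shows "Phi2 A $$ (i + (if a then m else 0), j + (if b then n else 0)) = phi a b (A $$ (i,j))"
  using Phi2_index[OF assms(1), of "i + (if a then m else 0)" "j + (if b then n else 0)"] assms
  by (cases a; cases b; simp)

lemma Phi2_inj: assumes A: "A \<in> carrier_mat m n" and B: "B \<in> carrier_mat m n" and eq: "Phi2 A = Phi2 B"
  shows "A = B"
proof (rule eq_matI)
  fix i j assume "i < dim_row B" "j < dim_col B"
  then have ij: "i < m" "j < n" using B by auto
  show "A $$ (i,j) = B $$ (i,j)"
  proof (rule phi_inj)
    fix a b
    show "phi a b (A $$ (i, j)) = phi a b (B $$ (i, j))"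
      using Phi2_index'[OF A ij, of a b] Phi2_index'[OF B ij, of a b] eq by simp
  qed
qed (use A B in auto)

lemma Phi2_surj: assumes M: "M \<in> carrier_mat (2*m) (2*n)"
  shows "\<exists>A \<in> carrier_mat m n. Phi2 A = M"
proof -
  define A where "A = mat m n (\<lambda>(i,j). psi (\<lambda>a b. M $$ (i + (if a then m else 0), j + (if b then n else 0))))"
  have A: "A \<in> carrier_mat m n" unfolding A_def by simp
  have "Phi2 A = M"
  proof (rule eq_matI)
    fix i j assume "i < dim_row M" "j < dim_col M"
    then have ij: "i < 2*m" "j < 2*n" using M by auto
    show "Phi2 A $$ (i,j) = M $$ (i,j)"
      unfolding Phi2_index[OF A ij] using ij by (auto simp: A_def phi_psi)
  qed (use M in \<open>auto simp: A_def\<close>)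
  with A show ?thesis by blast
qed

lemma Phi2_mult: assumes A: "A \<in> carrier_mat m n" and C: "C \<in> carrier_mat n p"
  shows "Phi2 (A * C) = Phi2 A * Phi2 C"
proof (rule eq_matI)
  fix i j assume "i < dim_row (Phi2 A * Phi2 C)" "j < dim_col (Phi2 A * Phi2 C)"
  then have ij: "i < 2*m" "j < 2*p" using A C by auto
  define a where "a = (m \<le> i)"
  define b where "b = (p \<le> j)"
  define i' where "i' = (if m \<le> i then i - m else i)"
  define j' where "j' = (if p \<le> j then j - p else j)"
  have i': "i' < m" and j': "j' < p" using ij by (auto simp: i'_def j'_def)
  have AC: "A * C \<in> carrier_mat m p" using A C by simp
  have "Phi2 (A * C) $$ (i,j) = phi a b ((A * C) $$ (i',j'))"
    unfolding Phi2_index[OF AC ij] a_def b_def i'_def j'_def ..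
  also have "\<dots> = phi a b (\<Sum>k\<in>{0..<n}. A $$ (i',k) * C $$ (k,j'))"
    using A C i' j' by (simp add: scalar_prod_def)
  also have "\<dots> = (\<Sum>k\<in>{0..<n}. phi a False (A $$ (i',k)) * phi False b (C $$ (k,j'))
       + phi a True (A $$ (i',k)) * phi True b (C $$ (k,j')))"
    by (simp add: phi_sum phi_mult)
  also have "\<dots> = (\<Sum>k\<in>{0..<n}. Phi2 A $$ (i,k) * Phi2 C $$ (k,j))
      + (\<Sum>k\<in>{0..<n}. Phi2 A $$ (i,k+n) * Phi2 C $$ (k+n,j))"
    unfolding sum.distrib[symmetric]
  proof (rule sum.cong[OF refl])
    fix k assume k: "k \<in> {0..<n}"
    then have k: "k < n" by simp
    have 1: "Phi2 A $$ (i,k) = phi a False (A $$ (i',k))"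
      using Phi2_index[OF A, of i k] k ij by (simp add: a_def i'_def)
    have 2: "Phi2 A $$ (i,k+n) = phi a True (A $$ (i',k))"
      using Phi2_index[OF A, of i "k+n"] k ij by (simp add: a_def i'_def)
    have 3: "Phi2 C $$ (k,j) = phi False b (C $$ (k,j'))"
      using Phi2_index[OF C, of k j] k ij by (simp add: b_def j'_def)
    have 4: "Phi2 C $$ (k+n,j) = phi True b (C $$ (k,j'))"
      using Phi2_index[OF C, of "k+n" j] k ij by (simp add: b_def j'_def)
    show "phi a False (A $$ (i',k)) * phi False b (C $$ (k,j')) + phi a True (A $$ (i',k)) * phi True b (C $$ (k,j'))
      = Phi2 A $$ (i,k) * Phi2 C $$ (k,j) + Phi2 A $$ (i,k+n) * Phi2 C $$ (k+n,j)"
      unfolding 1 2 3 4 ..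
  qed
  also have "\<dots> = (\<Sum>k\<in>{0..<2*n}. Phi2 A $$ (i,k) * Phi2 C $$ (k,j))"
    by (rule sum_split2[symmetric])
  also have "\<dots> = (Phi2 A * Phi2 C) $$ (i,j)"
    using A C ij by (simp add: scalar_prod_def)
  finally show "Phi2 (A * C) $$ (i,j) = (Phi2 A * Phi2 C) $$ (i,j)" .
qed (use A C in auto)

definition red :: "nat \<Rightarrow> nat \<Rightarrow> nat" where "red m i = (if m \<le> i then i - m else i)"

lemma red_less: "i < 2*m \<Longrightarrow> red m i < m"
  unfolding red_def by auto

lemma Phi2_idx: assumes "A \<in> carrier_mat m n" "i < 2*m" "j < 2*n"
  shows "Phi2 A $$ (i,j) = phi (m \<le> i) (n \<le> j) (A $$ (red m i, red n j))"
  unfolding red_def by (rule Phi2_index[OF assms])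

lemma Phi2_add: assumes A: "A \<in> carrier_mat m n" and B: "B \<in> carrier_mat m n"
  shows "Phi2 (A + B) = Phi2 A + Phi2 B"
proof (rule eq_matI)
  fix i j assume "i < dim_row (Phi2 A + Phi2 B)" "j < dim_col (Phi2 A + Phi2 B)"
  then have ij: "i < 2*m" "j < 2*n" using B by auto
  have AB: "A + B \<in> carrier_mat m n" using A B by simp
  have r: "red m i < m" "red n j < n" using ij by (simp_all add: red_less)
  have "Phi2 (A + B) $$ (i,j) = phi (m \<le> i) (n \<le> j) ((A + B) $$ (red m i, red n j))"
    by (rule Phi2_idx[OF AB ij])
  also have "(A + B) $$ (red m i, red n j) = A $$ (red m i, red n j) + B $$ (red m i, red n j)"
    using r B by simp
  also have "phi (m \<le> i) (n \<le> j) (A $$ (red m i, red n j) + B $$ (red m i, red n j))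
     = Phi2 A $$ (i,j) + Phi2 B $$ (i,j)"
    unfolding phi_add Phi2_idx[OF A ij] Phi2_idx[OF B ij] ..
  also have "\<dots> = (Phi2 A + Phi2 B) $$ (i,j)" using ij B by simp
  finally show "Phi2 (A + B) $$ (i,j) = (Phi2 A + Phi2 B) $$ (i,j)" .
qed (use A B in auto)

lemma Phi2_smult: assumes A: "A \<in> carrier_mat m n"
  shows "Phi2 (cs lam \<cdot>\<^sub>m A) = lam \<cdot>\<^sub>m Phi2 A"
proof (rule eq_matI)
  fix i j assume "i < dim_row (lam \<cdot>\<^sub>m Phi2 A)" "j < dim_col (lam \<cdot>\<^sub>m Phi2 A)"
  then have ij: "i < 2*m" "j < 2*n" using A by auto
  have AB: "cs lam \<cdot>\<^sub>m A \<in> carrier_mat m n" using A by simp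
  have r: "red m i < m" "red n j < n" using ij by (simp_all add: red_less)
  have "Phi2 (cs lam \<cdot>\<^sub>m A) $$ (i,j) = phi (m \<le> i) (n \<le> j) ((cs lam \<cdot>\<^sub>m A) $$ (red m i, red n j))"
    by (rule Phi2_idx[OF AB ij])
  also have "(cs lam \<cdot>\<^sub>m A) $$ (red m i, red n j) = cs lam * A $$ (red m i, red n j)"
    using r A by simp
  also have "phi (m \<le> i) (n \<le> j) (cs lam * A $$ (red m i, red n j)) = lam * Phi2 A $$ (i,j)"
    unfolding phi_cs Phi2_idx[OF A ij] ..
  also have "\<dots> = (lam \<cdot>\<^sub>m Phi2 A) $$ (i,j)" using ij A by simp
  finally show "Phi2 (cs lam \<cdot>\<^sub>m A) $$ (i,j) = (lam \<cdot>\<^sub>m Phi2 A) $$ (i,j)" .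
qed (use A in auto)


lemma Phi2_one: "Phi2 (1\<^sub>m m) = 1\<^sub>m (2*m)"
proof (rule eq_matI)
  fix i j assume "i < dim_row (1\<^sub>m (2*m) :: complex mat)" "j < dim_col (1\<^sub>m (2*m) :: complex mat)"
  then have ij: "i < 2*m" "j < 2*m" by auto
  have A: "(1\<^sub>m m :: C2 mat) \<in> carrier_mat m m" by simp
  define i' where "i' = (if m \<le> i then i - m else i)"
  define j' where "j' = (if m \<le> j then j - m else j)"
  have i': "i' < m" and j': "j' < m" using ij by (auto simp: i'_def j'_def)
  have e4: "Phi2 (1\<^sub>m m) $$ (i,j) = phi (m \<le> i) (m \<le> j) ((1\<^sub>m m :: C2 mat) $$ (i', j'))"
    unfolding i'_def j'_def by (rule Phi2_index[OF A ij])
  also have "\<dots> = phi (m \<le> i) (m \<le> j) (if i' = j' then 1 else 0)"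
    using i' j' by simp
  also have "\<dots> = (if i' = j' \<and> (m \<le> i) = (m \<le> j) then 1 else 0)"
    by (simp add: phi_one)
  finally have e5: "Phi2 (1\<^sub>m m) $$ (i,j) = (if i' = j' \<and> (m \<le> i) = (m \<le> j) then 1 else 0)" .
  have e6: "(i' = j' \<and> (m \<le> i) = (m \<le> j)) = (i = j)"
    unfolding i'_def j'_def using ij by (cases "m \<le> i"; cases "m \<le> j"; simp; linarith)
  show "Phi2 (1\<^sub>m m) $$ (i,j) = 1\<^sub>m (2*m) $$ (i,j)"
    using ij unfolding e5 e6 by simp
qed auto


lemma Phi2_sharp: assumes A: "A \<in> carrier_mat m n"
  shows "Phi2 (sharp A) = ctrans (Phi2 A)"
proof (rule eq_matI)
  have S: "sharp A \<in> carrier_mat n m" using A by (simp add: sharp_def)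
  fix i j assume "i < dim_row (ctrans (Phi2 A))" "j < dim_col (ctrans (Phi2 A))"
  then have ij: "i < 2*n" "j < 2*m" using A by (auto simp: ctrans_def)
  define i' where "i' = (if n \<le> i then i - n else i)"
  define j' where "j' = (if m \<le> j then j - m else j)"
  have i': "i' < n" and j': "j' < m" using ij by (auto simp: i'_def j'_def)
  have e1: "ctrans (Phi2 A) $$ (i,j) = cnj (Phi2 A $$ (j,i))" using ij A by (simp add: ctrans_def)
  have e2: "Phi2 A $$ (j,i) = phi (m \<le> j) (n \<le> i) (A $$ (j', i'))"
    unfolding i'_def j'_def by (rule Phi2_index[OF A ij(2) ij(1)])
  have e3: "sharp A $$ (i',j') = cs (cnj (c0 (A $$ (j',i')))) - cs (cnj (c1 (A $$ (j',i')))) * e1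
      - cs (cnj (c2 (A $$ (j',i')))) * e2 - cs (cnj (c3 (A $$ (j',i')))) * e12"
    using i' j' A by (simp add: sharp_def ctrans_def comp0_def comp1_def comp2_def comp3_def)
  have e4: "Phi2 (sharp A) $$ (i,j) = phi (n \<le> i) (m \<le> j) (sharp A $$ (i', j'))"
    unfolding i'_def j'_def by (rule Phi2_index[OF S ij])
  show "Phi2 (sharp A) $$ (i,j) = ctrans (Phi2 A) $$ (i,j)"
    unfolding e4 e3 e1 e2 phi_sharp ..
qed (use A in \<open>auto simp: ctrans_def sharp_def\<close>)


lemma Phi2_pow: assumes A: "A \<in> carrier_mat m m"
  shows "Phi2 (A ^\<^sub>m k) = Phi2 A ^\<^sub>m k"
proof (induct k)
  case 0
  then show ?case using A by (simp add: Phi2_one)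
next
  case (Suc k)
  have "Phi2 (A ^\<^sub>m Suc k) = Phi2 (A ^\<^sub>m k * A)" by simp
  also have "\<dots> = Phi2 (A ^\<^sub>m k) * Phi2 A" by (rule Phi2_mult[OF pow_carrier_mat[OF A] A])
  finally show ?case using Suc by simp
qed



lemma sum_delta_r: fixes f :: "nat \<Rightarrow> 'a::ring_1"
  assumes "j < k" shows "(\<Sum>l\<in>{0..<k}. f l * (c * (if l = j then 1 else 0))) = f j * c"
proof -
  have "(\<Sum>l\<in>{0..<k}. f l * (c * (if l = j then 1 else 0))) = (\<Sum>l\<in>{0..<k}. if l = j then f j * c else 0)"
    by (rule sum.cong) auto
  also have "\<dots> = f j * c" using assms by (simp add: sum.delta)
  finally show ?thesis .
qed

lemma CH_entry: fixes M :: "'a::comm_ring_1 mat"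
  assumes M: "M \<in> carrier_mat k k" and ij: "i < k" "j < k"
  shows "(\<Sum>t\<le>degree (char_poly M). coeff (char_poly M) t * (M ^\<^sub>m t) $$ (i,j)) = 0"
proof -
  define X where "X = char_poly_matrix M"
  define Ad where "Ad = adj_mat X"
  define chi where "chi = char_poly M"
  have X: "X \<in> carrier_mat k k" using M by (simp add: X_def)
  have Ad: "Ad \<in> carrier_mat k k" using adj_mat(1)[OF X] by (simp add: Ad_def)
  have XAd: "X * Ad = chi \<cdot>\<^sub>m 1\<^sub>m k" using adj_mat(2)[OF X] by (simp add: Ad_def X_def chi_def char_poly_def)
  have Xidx: "X $$ (a,b) = (if a = b then [:0,1:] else 0) + [:- M $$ (a,b):]" if "a < k" "b < k" for a b
    using M that by (simp add: X_def char_poly_matrix_def)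
  define pr where "pr t a b = coeff (pCons 0 (Ad $$ (a,b))) t" for t a b
  have E: "coeff chi t * (if a = b then 1 else 0) = pr t a b - (\<Sum>l\<in>{0..<k}. M $$ (a,l) * coeff (Ad $$ (l,b)) t)"
    if ab: "a < k" "b < k" for t a b
  proof -
    have "(X * Ad) $$ (a,b) = (\<Sum>l\<in>{0..<k}. X $$ (a,l) * Ad $$ (l,b))"
      using X Ad ab by (simp add: scalar_prod_def)
    also have "\<dots> = (\<Sum>l\<in>{0..<k}. (if l = a then pCons 0 (Ad $$ (a,b)) else 0) + Polynomial.smult (- M $$ (a,l)) (Ad $$ (l,b)))"
    proof (rule sum.cong[OF refl])
      fix l assume l: "l \<in> {0..<k}"
      show "X $$ (a,l) * Ad $$ (l,b) = (if l = a then pCons 0 (Ad $$ (a,b)) else 0) + Polynomial.smult (- M $$ (a,l)) (Ad $$ (l,b))"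
        using l ab by (auto simp: Xidx distrib_right)
    qed
    also have "\<dots> = pCons 0 (Ad $$ (a,b)) + (\<Sum>l\<in>{0..<k}. Polynomial.smult (- M $$ (a,l)) (Ad $$ (l,b)))"
    proof -
      have d: "(\<Sum>l\<in>{0..<k}. if l = a then pCons 0 (Ad $$ (a, b)) else 0) = pCons 0 (Ad $$ (a,b))"
        using ab by simp
      show ?thesis unfolding sum.distrib d ..
    qed
    finally have "coeff ((X * Ad) $$ (a,b)) t = pr t a b - (\<Sum>l\<in>{0..<k}. M $$ (a,l) * coeff (Ad $$ (l,b)) t)"
      by (simp add: pr_def coeff_sum sum_negf)
    moreover have "(X * Ad) $$ (a,b) = chi * (if a = b then 1 else 0)" using XAd ab by simp
    ultimately show ?thesis by (cases "a = b") auto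
  qed
  define g where "g t = (\<Sum>l\<in>{0..<k}. (M ^\<^sub>m t) $$ (i,l) * pr t l j)" for t
  have tele: "coeff chi t * (M ^\<^sub>m t) $$ (i,j) = g t - g (Suc t)" for t
  proof -
    have Mt: "M ^\<^sub>m t \<in> carrier_mat k k" using M by simp
    have "coeff chi t * (M ^\<^sub>m t) $$ (i,j) = (\<Sum>l\<in>{0..<k}. (M ^\<^sub>m t) $$ (i,l) * (coeff chi t * (if l = j then 1 else 0)))"
      using ij by (simp add: sum_delta_r mult.commute)
    also have "\<dots> = (\<Sum>l\<in>{0..<k}. (M ^\<^sub>m t) $$ (i,l) * (pr t l j - (\<Sum>s\<in>{0..<k}. M $$ (l,s) * coeff (Ad $$ (s,j)) t)))"
      using ij by (intro sum.cong refl) (simp add: E)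
    also have "\<dots> = g t - (\<Sum>l\<in>{0..<k}. \<Sum>s\<in>{0..<k}. (M ^\<^sub>m t) $$ (i,l) * M $$ (l,s) * coeff (Ad $$ (s,j)) t)"
      by (simp add: g_def right_diff_distrib sum_subtractf sum_distrib_left mult.assoc)
    also have "(\<Sum>l\<in>{0..<k}. \<Sum>s\<in>{0..<k}. (M ^\<^sub>m t) $$ (i,l) * M $$ (l,s) * coeff (Ad $$ (s,j)) t) = g (Suc t)"
    proof -
      have "g (Suc t) = (\<Sum>s\<in>{0..<k}. (\<Sum>l\<in>{0..<k}. (M ^\<^sub>m t) $$ (i,l) * M $$ (l,s)) * coeff (Ad $$ (s,j)) t)"
        unfolding g_def pr_def using Mt M ij by (intro sum.cong refl) (simp add: scalar_prod_def)
      also have "\<dots> = (\<Sum>s\<in>{0..<k}. \<Sum>l\<in>{0..<k}. (M ^\<^sub>m t) $$ (i,l) * M $$ (l,s) * coeff (Ad $$ (s,j)) t)"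
        by (simp add: sum_distrib_right)
      also have "\<dots> = (\<Sum>l\<in>{0..<k}. \<Sum>s\<in>{0..<k}. (M ^\<^sub>m t) $$ (i,l) * M $$ (l,s) * coeff (Ad $$ (s,j)) t)"
        by (rule sum.swap)
      finally show ?thesis by simp
    qed
    finally show ?thesis .
  qed
  define D where "D = degree chi + (\<Sum>l\<in>{0..<k}. degree (Ad $$ (l,j)))"
  define N where "N = Suc (Suc D)"
  have "(\<Sum>t\<le>degree chi. coeff chi t * (M ^\<^sub>m t) $$ (i,j)) = (\<Sum>t\<in>{..<N}. coeff chi t * (M ^\<^sub>m t) $$ (i,j))"
  proof (rule sum.mono_neutral_left)
    show "{..degree chi} \<subseteq> {..<N}" by (auto simp: N_def D_def)
    show "\<forall>t\<in>{..<N} - {..degree chi}. coeff chi t * (M ^\<^sub>m t) $$ (i, j) = 0"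
      by (auto simp: coeff_eq_0)
  qed simp
  also have "\<dots> = g 0 - g N"
    unfolding tele by (rule sum_lessThan_telescope')
  also have "g 0 = 0" by (simp add: g_def pr_def)
  also have "g N = 0"
    unfolding g_def
  proof (rule sum.neutral, rule ballI)
    fix l assume l: "l \<in> {0..<k}"
    have "degree (Ad $$ (l,j)) \<le> (\<Sum>l\<in>{0..<k}. degree (Ad $$ (l,j)))"
      using l by (intro member_le_sum) auto
    then have "degree (Ad $$ (l,j)) < Suc D" by (simp add: D_def)
    then have "pr N l j = 0" by (simp add: pr_def N_def coeff_eq_0)
    then show "(M ^\<^sub>m N) $$ (i,l) * pr N l j = 0" by simp
  qed
  finally show ?thesis by (simp add: chi_def)
qed



lemma row_block_dim[simp]: "dim_row (row_block X Y) = dim_row X" "dim_col (row_block X Y) = dim_col X + dim_col Y"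
  by (simp_all add: row_block_def)

lemma row_block_index: "i < dim_row X \<Longrightarrow> j < dim_col X + dim_col Y \<Longrightarrow>
  row_block X Y $$ (i,j) = (if j < dim_col X then X $$ (i,j) else Y $$ (i, j - dim_col X))"
  by (simp add: row_block_def)

lemma sum_delta_l: fixes f :: "nat \<Rightarrow> 'a::ring_1"
  assumes "i < m" shows "(\<Sum>k\<in>{0..<m}. (u * (if i = k then 1 else 0)) * f k) = u * f i"
proof -
  have "(\<Sum>k\<in>{0..<m}. (u * (if i = k then 1 else 0)) * f k) = (\<Sum>k\<in>{0..<m}. if k = i then u * f i else 0)"
    by (rule sum.cong) auto
  also have "\<dots> = u * f i" using assms by (simp add: sum.delta)
  finally show ?thesis .
qed

lemma sum_delta_r2: fixes f :: "nat \<Rightarrow> 'a::ring_1"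
  assumes "j < n" shows "(\<Sum>k\<in>{0..<n}. f k * (u * (if j = k then 1 else 0))) = f j * u"
proof -
  have "(\<Sum>k\<in>{0..<n}. f k * (u * (if j = k then 1 else 0))) = (\<Sum>k\<in>{0..<n}. if k = j then f j * u else 0)"
    by (rule sum.cong) auto
  also have "\<dots> = f j * u" using assms by (simp add: sum.delta)
  finally show ?thesis .
qed

lemma rb_left: fixes P :: "'a::ring_1 mat"
  assumes P: "P \<in> carrier_mat (2*m) q" and il: "i < m" "l < q"
  shows "(row_block (u \<cdot>\<^sub>m 1\<^sub>m m) (w \<cdot>\<^sub>m 1\<^sub>m m) * P) $$ (i,l) = u * P $$ (i,l) + w * P $$ (i+m,l)"
proof -
  define R where "R = row_block (u \<cdot>\<^sub>m 1\<^sub>m m) (w \<cdot>\<^sub>m 1\<^sub>m m)"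
  have R: "dim_row R = m" "dim_col R = 2*m" by (simp_all add: R_def)
  have "(R * P) $$ (i,l) = (\<Sum>k\<in>{0..<2*m}. R $$ (i,k) * P $$ (k,l))"
    using P il R by (simp add: scalar_prod_def)
  also have "\<dots> = (\<Sum>k\<in>{0..<m}. R $$ (i,k) * P $$ (k,l)) + (\<Sum>k\<in>{0..<m}. R $$ (i,k+m) * P $$ (k+m,l))"
    by (rule sum_split2)
  also have "(\<Sum>k\<in>{0..<m}. R $$ (i,k) * P $$ (k,l)) = (\<Sum>k\<in>{0..<m}. (u * (if i = k then 1 else 0)) * P $$ (k,l))"
    using il by (intro sum.cong refl) (simp add: R_def row_block_index)
  also have "\<dots> = u * P $$ (i,l)" by (rule sum_delta_l[OF il(1)])
  also have "(\<Sum>k\<in>{0..<m}. R $$ (i,k+m) * P $$ (k+m,l)) = (\<Sum>k\<in>{0..<m}. (w * (if i = k then 1 else 0)) * P $$ (k+m,l))"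
    using il by (intro sum.cong refl) (simp add: R_def row_block_index)
  also have "\<dots> = w * P $$ (i+m,l)" by (rule sum_delta_l[OF il(1)])
  finally show ?thesis unfolding R_def .
qed

lemma rb_right: fixes Q :: "'a::ring_1 mat"
  assumes Q: "Q \<in> carrier_mat r (2*n)" and ij: "i < r" "j < n"
  shows "(Q * transpose_mat (row_block (u \<cdot>\<^sub>m 1\<^sub>m n) (w \<cdot>\<^sub>m 1\<^sub>m n))) $$ (i,j) = Q $$ (i,j) * u + Q $$ (i,j+n) * w"
proof -
  define R where "R = row_block (u \<cdot>\<^sub>m 1\<^sub>m n) (w \<cdot>\<^sub>m 1\<^sub>m n)"
  have R: "dim_row R = n" "dim_col R = 2*n" by (simp_all add: R_def)
  have "(Q * transpose_mat R) $$ (i,j) = (\<Sum>k\<in>{0..<2*n}. Q $$ (i,k) * R $$ (j,k))"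
    using Q ij R by (simp add: scalar_prod_def)
  also have "\<dots> = (\<Sum>k\<in>{0..<n}. Q $$ (i,k) * R $$ (j,k)) + (\<Sum>k\<in>{0..<n}. Q $$ (i,k+n) * R $$ (j,k+n))"
    by (rule sum_split2)
  also have "(\<Sum>k\<in>{0..<n}. Q $$ (i,k) * R $$ (j,k)) = (\<Sum>k\<in>{0..<n}. Q $$ (i,k) * (u * (if j = k then 1 else 0)))"
    using ij by (intro sum.cong refl) (simp add: R_def row_block_index)
  also have "\<dots> = Q $$ (i,j) * u" by (rule sum_delta_r2[OF ij(2)])
  also have "(\<Sum>k\<in>{0..<n}. Q $$ (i,k+n) * R $$ (j,k+n)) = (\<Sum>k\<in>{0..<n}. Q $$ (i,k+n) * (w * (if j = k then 1 else 0)))"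
    using ij by (intro sum.cong refl) (simp add: R_def row_block_index)
  also have "\<dots> = Q $$ (i,j+n) * w" by (rule sum_delta_r2[OF ij(2)])
  finally show ?thesis unfolding R_def .
qed

lemma Phi2_e: assumes A: "A \<in> carrier_mat m n"
  shows "A = cs (1/4) \<cdot>\<^sub>m
          (row_block ((1 - cs \<i> * e1) \<cdot>\<^sub>m 1\<^sub>m m) ((e2 + cs \<i> * e12) \<cdot>\<^sub>m 1\<^sub>m m)
           * map_mat cs (Phi2 A)
           * transpose_mat
               (row_block ((1 - cs \<i> * e1) \<cdot>\<^sub>m 1\<^sub>m n) ((- e2 + cs \<i> * e12) \<cdot>\<^sub>m 1\<^sub>m n)))"
    (is "A = cs (1/4) \<cdot>\<^sub>m (?U * ?P * ?V)")
proof -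
  have P: "?P \<in> carrier_mat (2*m) (2*n)" using A by (intro carrier_matI) auto
  have UP: "?U * ?P \<in> carrier_mat m (2*n)" using P by (intro carrier_matI) auto
  have "cs (1/4) \<cdot>\<^sub>m (?U * ?P * ?V) = A"
  proof (rule eq_matI)
    fix i j assume "i < dim_row A" "j < dim_col A"
    then have ij: "i < m" "j < n" using A by auto
    have jn: "j + n < 2*n" using ij by simp
    have im: "i + m < 2*m" using ij by simp
    have "(?U * ?P * ?V) $$ (i,j) = (?U * ?P) $$ (i,j) * (1 - cs \<i> * e1) + (?U * ?P) $$ (i,j+n) * (- e2 + cs \<i> * e12)"
      by (rule rb_right[OF UP ij])
    also have "(?U * ?P) $$ (i,j) = (1 - cs \<i> * e1) * ?P $$ (i,j) + (e2 + cs \<i> * e12) * ?P $$ (i+m,j)"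
      using ij by (intro rb_left[OF P]) auto
    also have "(?U * ?P) $$ (i,j+n) = (1 - cs \<i> * e1) * ?P $$ (i,j+n) + (e2 + cs \<i> * e12) * ?P $$ (i+m,j+n)"
      using ij by (intro rb_left[OF P]) auto
    also have "?P $$ (i,j) = cs (phi False False (A $$ (i,j)))"
      using Phi2_index'[OF A ij, of False False] ij A by simp
    also have "?P $$ (i+m,j) = cs (phi True False (A $$ (i,j)))"
      using Phi2_index'[OF A ij, of True False] ij A by simp
    also have "?P $$ (i,j+n) = cs (phi False True (A $$ (i,j)))"
      using Phi2_index'[OF A ij, of False True] ij A by simp
    also have "?P $$ (i+m,j+n) = cs (phi True True (A $$ (i,j)))"
      using Phi2_index'[OF A ij, of True True] ij A by simp
    finally have e: "(?U * ?P * ?V) $$ (i,j) = ((1 - cs \<i> * e1) * cs (phi False False (A $$ (i,j))) + (e2 + cs \<i> * e12) * cs (phi True False (A $$ (i,j)))) * (1 - cs \<i> * e1)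
    + ((1 - cs \<i> * e1) * cs (phi False True (A $$ (i,j))) + (e2 + cs \<i> * e12) * cs (phi True True (A $$ (i,j)))) * (- e2 + cs \<i> * e12)" .
    have "(cs (1/4) \<cdot>\<^sub>m (?U * ?P * ?V)) $$ (i,j) = cs (1/4) * (?U * ?P * ?V) $$ (i,j)"
      using ij by simp
    also have "\<dots> = A $$ (i,j)" unfolding e by (rule elem_e[symmetric])
    finally show "(cs (1/4) \<cdot>\<^sub>m (?U * ?P * ?V)) $$ (i,j) = A $$ (i,j)" .
  qed (use A in auto)
  then show ?thesis by simp
qed

lemma invertible_iff_ex: fixes A :: "'a::semiring_1 mat" assumes A: "A \<in> carrier_mat n n"
  shows "invertible_mat A \<longleftrightarrow> (\<exists>B \<in> carrier_mat n n. A * B = 1\<^sub>m n \<and> B * A = 1\<^sub>m n)"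
proof
  assume "invertible_mat A"
  then obtain B where AB: "A * B = 1\<^sub>m (dim_row A)" and BA: "B * A = 1\<^sub>m (dim_row B)"
    unfolding invertible_mat_def inverts_mat_def by blast
  have c: "dim_col B = n" using arg_cong[OF AB, of dim_col] A by simp
  have r: "dim_row B = n" using arg_cong[OF BA, of dim_col] A by simp
  have B: "B \<in> carrier_mat n n" using c r by (intro carrier_matI)
  show "\<exists>B \<in> carrier_mat n n. A * B = 1\<^sub>m n \<and> B * A = 1\<^sub>m n"
    using B AB BA A r by auto
next
  assume "\<exists>B \<in> carrier_mat n n. A * B = 1\<^sub>m n \<and> B * A = 1\<^sub>m n"
  then obtain B where B: "B \<in> carrier_mat n n" and AB: "A * B = 1\<^sub>m n" and BA: "B * A = 1\<^sub>m n" by blast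
  show "invertible_mat A"
    unfolding invertible_mat_def inverts_mat_def square_mat.simps
    using A B AB BA by auto
qed

lemma Phi2_inv: assumes A: "A \<in> carrier_mat m m"
  shows "invertible_mat A \<longleftrightarrow> invertible_mat (Phi2 A)"
proof
  assume "invertible_mat A"
  then obtain B where B: "B \<in> carrier_mat m m" and AB: "A * B = 1\<^sub>m m" and BA: "B * A = 1\<^sub>m m"
    using invertible_iff_ex[OF A] by blast
  have "Phi2 A * Phi2 B = 1\<^sub>m (2*m)" using Phi2_mult[OF A B] AB Phi2_one by simp
  moreover have "Phi2 B * Phi2 A = 1\<^sub>m (2*m)" using Phi2_mult[OF B A] BA Phi2_one by simp
  ultimately show "invertible_mat (Phi2 A)"
    using invertible_iff_ex[OF Phi2_carrier[OF A]] Phi2_carrier[OF B] by blast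
next
  assume "invertible_mat (Phi2 A)"
  then obtain N where N: "N \<in> carrier_mat (2*m) (2*m)" and AN: "Phi2 A * N = 1\<^sub>m (2*m)" and NA: "N * Phi2 A = 1\<^sub>m (2*m)"
    using invertible_iff_ex[OF Phi2_carrier[OF A]] by blast
  obtain B where B: "B \<in> carrier_mat m m" and NB: "Phi2 B = N" using Phi2_surj[OF N] by blast
  have "Phi2 (A * B) = Phi2 (1\<^sub>m m)" using Phi2_mult[OF A B] NB AN Phi2_one by simp
  then have AB: "A * B = 1\<^sub>m m" using A B by (intro Phi2_inj[of _ m m]) auto
  have "Phi2 (B * A) = Phi2 (1\<^sub>m m)" using Phi2_mult[OF B A] NB NA Phi2_one by simp
  then have BA: "B * A = 1\<^sub>m m" using A B by (intro Phi2_inj[of _ m m]) auto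
  show "invertible_mat A" using invertible_iff_ex[OF A] B AB BA by blast
qed

lemma Phi2_sim: assumes A: "A \<in> carrier_mat m m" and B: "B \<in> carrier_mat m m"
  shows "(\<exists>X \<in> carrier_mat m m. invertible_mat X \<and> A * X = X * B) \<longleftrightarrow> similar_mat (Phi2 A) (Phi2 B)"
proof
  assume "\<exists>X \<in> carrier_mat m m. invertible_mat X \<and> A * X = X * B"
  then obtain X where X: "X \<in> carrier_mat m m" and iX: "invertible_mat X" and AX: "A * X = X * B" by blast
  obtain Y where Y: "Y \<in> carrier_mat m m" and XY: "X * Y = 1\<^sub>m m" and YX: "Y * X = 1\<^sub>m m"
    using invertible_iff_ex[OF X] iX by blast
  have "A = A * (X * Y)" using A XY by simp
  also have "\<dots> = (A * X) * Y" using A X Y by simp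
  also have "\<dots> = X * B * Y" using AX by simp
  finally have AXBY: "A = X * B * Y" .
  have 1: "Phi2 X * Phi2 Y = 1\<^sub>m (2*m)" using Phi2_mult[OF X Y] XY Phi2_one by simp
  have 2: "Phi2 Y * Phi2 X = 1\<^sub>m (2*m)" using Phi2_mult[OF Y X] YX Phi2_one by simp
  have XB: "X * B \<in> carrier_mat m m" using X B by simp
  have 3: "Phi2 A = Phi2 X * Phi2 B * Phi2 Y"
    using AXBY Phi2_mult[OF XB Y] Phi2_mult[OF X B] by simp
  have "similar_mat_wit (Phi2 A) (Phi2 B) (Phi2 X) (Phi2 Y)"
    by (rule similar_mat_witI[OF 1 2 3 Phi2_carrier[OF A] Phi2_carrier[OF B] Phi2_carrier[OF X] Phi2_carrier[OF Y]])
  then show "similar_mat (Phi2 A) (Phi2 B)" unfolding similar_mat_def by blast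
next
  assume "similar_mat (Phi2 A) (Phi2 B)"
  then obtain n P Q where S: "{Phi2 A, Phi2 B, P, Q} \<subseteq> carrier_mat n n" and PQ: "P * Q = 1\<^sub>m n"
    and QP: "Q * P = 1\<^sub>m n" and APBQ: "Phi2 A = P * Phi2 B * Q"
    using similar_matD by blast
  have n: "n = 2*m" using S A by auto
  have P: "P \<in> carrier_mat (2*m) (2*m)" and Q: "Q \<in> carrier_mat (2*m) (2*m)" using S n by auto
  obtain X where X: "X \<in> carrier_mat m m" and PX: "Phi2 X = P" using Phi2_surj[OF P] by blast
  obtain Y where Y: "Y \<in> carrier_mat m m" and QY: "Phi2 Y = Q" using Phi2_surj[OF Q] by blast
  have "Phi2 (X * Y) = Phi2 (1\<^sub>m m)" using Phi2_mult[OF X Y] PX QY PQ n Phi2_one by simp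
  then have XY: "X * Y = 1\<^sub>m m" using X Y by (intro Phi2_inj[of _ m m]) auto
  have "Phi2 (Y * X) = Phi2 (1\<^sub>m m)" using Phi2_mult[OF Y X] PX QY QP n Phi2_one by simp
  then have YX: "Y * X = 1\<^sub>m m" using X Y by (intro Phi2_inj[of _ m m]) auto
  have XB: "X * B \<in> carrier_mat m m" using X B by simp
  have "Phi2 (X * B * Y) = Phi2 A"
    using APBQ Phi2_mult[OF XB Y] Phi2_mult[OF X B] PX QY by simp
  then have AXBY: "A = X * B * Y" using A X B Y by (intro Phi2_inj[of _ m m]) auto
  have "A * X = X * B * Y * X" using AXBY by simp
  also have "\<dots> = X * B * (Y * X)" using XB Y X by simp
  also have "\<dots> = X * B" unfolding YX by (rule right_mult_one_mat[OF XB])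
  finally have AX: "A * X = X * B" .
  have "invertible_mat X" using invertible_iff_ex[OF X] Y XY YX by blast
  then show "\<exists>X \<in> carrier_mat m m. invertible_mat X \<and> A * X = X * B" using X AX by blast
qed

lemma Phi2_CH: assumes A: "A \<in> carrier_mat m m"
  shows "poly_eval_C2mat (char_poly (Phi2 A)) A = 0\<^sub>m m m"
proof (rule eq_matI)
  fix i j assume "i < dim_row (0\<^sub>m m m :: C2 mat)" "j < dim_col (0\<^sub>m m m :: C2 mat)"
  then have ij: "i < m" "j < m" by auto
  define chi where "chi = char_poly (Phi2 A)"
  have "poly_eval_C2mat chi A $$ (i,j) = (\<Sum>t\<le>degree chi. cs (coeff chi t) * (A ^\<^sub>m t) $$ (i,j))"
    using A ij by (simp add: poly_eval_C2mat_def)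
  also have "\<dots> = 0"
  proof (rule phi_inj)
    fix a b
    define i2 where "i2 = i + (if a then m else 0)"
    define j2 where "j2 = j + (if b then m else 0)"
    have i2: "i2 < 2*m" "j2 < 2*m" using ij by (auto simp: i2_def j2_def)
    have "phi a b (\<Sum>t\<le>degree chi. cs (coeff chi t) * (A ^\<^sub>m t) $$ (i,j))
        = (\<Sum>t\<le>degree chi. coeff chi t * (Phi2 A ^\<^sub>m t) $$ (i2,j2))"
      unfolding phi_sum phi_cs
    proof (rule sum.cong[OF refl])
      fix t
      have At: "A ^\<^sub>m t \<in> carrier_mat m m" using A by simp
      show "coeff chi t * phi a b ((A ^\<^sub>m t) $$ (i,j)) = coeff chi t * (Phi2 A ^\<^sub>m t) $$ (i2,j2)"
        unfolding i2_def j2_def Phi2_pow[OF A, symmetric] Phi2_index'[OF At ij] ..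
    qed
    also have "\<dots> = 0" unfolding chi_def
      by (rule CH_entry[OF Phi2_carrier[OF A] i2])
    finally show "phi a b (\<Sum>t\<le>degree chi. cs (coeff chi t) * (A ^\<^sub>m t) $$ (i,j)) = phi a b 0" by simp
  qed
  finally show "poly_eval_C2mat (char_poly (Phi2 A)) A $$ (i,j) = 0\<^sub>m m m $$ (i,j)"
    using ij by (simp add: chi_def)
qed (use A in \<open>auto simp: poly_eval_C2mat_def\<close>)


theorem corollary11:
  fixes m n p :: nat and A B :: "C2 mat" and C :: "C2 mat" and lam :: complex
  assumes A: "A \<in> carrier_mat m n" and B: "B \<in> carrier_mat m n"
    and C: "C \<in> carrier_mat n p"
  shows
    "(A = B \<longleftrightarrow> Phi2 A = Phi2 B)
   \<and> Phi2 (A + B) = Phi2 A + Phi2 B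
   \<and> Phi2 (A * C) = Phi2 A * Phi2 C
   \<and> Phi2 (cs lam \<cdot>\<^sub>m A) = lam \<cdot>\<^sub>m Phi2 A
   \<and> Phi2 (1\<^sub>m m) = 1\<^sub>m (2 * m)
   \<and> Phi2 (sharp A) = ctrans (Phi2 A)
   \<and> A = cs (1/4) \<cdot>\<^sub>m
          (row_block ((1 - cs \<i> * e1) \<cdot>\<^sub>m 1\<^sub>m m) ((e2 + cs \<i> * e12) \<cdot>\<^sub>m 1\<^sub>m m)
           * map_mat cs (Phi2 A)
           * transpose_mat
               (row_block ((1 - cs \<i> * e1) \<cdot>\<^sub>m 1\<^sub>m n) ((- e2 + cs \<i> * e12) \<cdot>\<^sub>m 1\<^sub>m n)))
   \<and> (m = n \<longrightarrow>
        (invertible_mat A \<longleftrightarrow> invertible_mat (Phi2 A))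
      \<and> (\<forall>Ainv \<in> carrier_mat m m. A * Ainv = 1\<^sub>m m \<and> Ainv * A = 1\<^sub>m m \<longrightarrow>
            Phi2 Ainv * Phi2 A = 1\<^sub>m (2 * m) \<and> Phi2 A * Phi2 Ainv = 1\<^sub>m (2 * m))
      \<and> poly_eval_C2mat (char_poly (Phi2 A)) A = 0\<^sub>m m m
      \<and> ((\<exists>X \<in> carrier_mat m m. invertible_mat X \<and> A * X = X * B)
           \<longleftrightarrow> similar_mat (Phi2 A) (Phi2 B)))"
proof -
  have a: "A = B \<longleftrightarrow> Phi2 A = Phi2 B" using Phi2_inj[OF A B] by auto
  have g: "m = n \<longrightarrow>
        (invertible_mat A \<longleftrightarrow> invertible_mat (Phi2 A))
      \<and> (\<forall>Ainv \<in> carrier_mat m m. A * Ainv = 1\<^sub>m m \<and> Ainv * A = 1\<^sub>m m \<longrightarrow>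
            Phi2 Ainv * Phi2 A = 1\<^sub>m (2 * m) \<and> Phi2 A * Phi2 Ainv = 1\<^sub>m (2 * m))
      \<and> poly_eval_C2mat (char_poly (Phi2 A)) A = 0\<^sub>m m m
      \<and> ((\<exists>X \<in> carrier_mat m m. invertible_mat X \<and> A * X = X * B)
           \<longleftrightarrow> similar_mat (Phi2 A) (Phi2 B))"
  proof
    assume mn: "m = n"
    have A': "A \<in> carrier_mat m m" using A mn by simp
    have B': "B \<in> carrier_mat m m" using B mn by simp
    have inv: "\<forall>Ainv \<in> carrier_mat m m. A * Ainv = 1\<^sub>m m \<and> Ainv * A = 1\<^sub>m m \<longrightarrow>
            Phi2 Ainv * Phi2 A = 1\<^sub>m (2 * m) \<and> Phi2 A * Phi2 Ainv = 1\<^sub>m (2 * m)"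
    proof (intro ballI impI)
      fix Ainv assume Ai: "Ainv \<in> carrier_mat m m" and h: "A * Ainv = 1\<^sub>m m \<and> Ainv * A = 1\<^sub>m m"
      show "Phi2 Ainv * Phi2 A = 1\<^sub>m (2 * m) \<and> Phi2 A * Phi2 Ainv = 1\<^sub>m (2 * m)"
        using Phi2_mult[OF Ai A'] Phi2_mult[OF A' Ai] h Phi2_one[of m] by simp
    qed
    show "(invertible_mat A \<longleftrightarrow> invertible_mat (Phi2 A))
      \<and> (\<forall>Ainv \<in> carrier_mat m m. A * Ainv = 1\<^sub>m m \<and> Ainv * A = 1\<^sub>m m \<longrightarrow>
            Phi2 Ainv * Phi2 A = 1\<^sub>m (2 * m) \<and> Phi2 A * Phi2 Ainv = 1\<^sub>m (2 * m))
      \<and> poly_eval_C2mat (char_poly (Phi2 A)) A = 0\<^sub>m m m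
      \<and> ((\<exists>X \<in> carrier_mat m m. invertible_mat X \<and> A * X = X * B)
           \<longleftrightarrow> similar_mat (Phi2 A) (Phi2 B))"
      using Phi2_inv[OF A'] inv Phi2_CH[OF A'] Phi2_sim[OF A' B'] by blast
  qed
  show ?thesis
    using a Phi2_add[OF A B] Phi2_mult[OF A C] Phi2_smult[OF A, of lam] Phi2_one[of m]
      Phi2_sharp[OF A] Phi2_e[OF A] g by blast
qed

end
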